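(* Let $T$ be a continuous linear operator on a Polish topological vector space $X$ with $\mathcal P_{T,*}(X)\neq\emptyset$, and let $F$ be a closed subset of $X$ such that (i) $F-F$ is dilation-invariant and nowhere dense in $X$; (ii) $T(F\setminus\ker^*(T))\subset F$; (iii) $T(\overline{F-F}\setminus\ker^*(T))\subset\overline{F-F}$. Then $\mathcal P_{T,*}(X\setminus F)$ is a dense $G_\delta$ subset of $\mathcal P_T(X)$.
   Context: $\mathcal P_T(X)$: $T$-invariant Borel probability measures with the Prokhorov topology; $\mathcal P_{T,*}(X)$: those with full support; $\mathcal P_{T,*}(A)=\{m\in\mathcal P_{T,*}(X): m(A)=1\}$. $\ker^*(T)=\bigcup_{k\in\mathbb N}\ker(T^k)$. $F-F=\{x-y:x,y\in F\}$. A set $A$ is dilation-invariant if $r\cdot A=A$ for every $r>0$. *)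

theory Defs
  imports "HOL-Probability.Probability"
begin

text \<open>A Polish topological vector space: a real vector space whose topology is induced by a
complete separable metric (class polish_space) and in which addition and scalar
multiplication are jointly continuous.\<close>

definition tvs_ops_continuous :: "'a::{real_vector, topological_space} itself \<Rightarrow> bool" where
  "tvs_ops_continuous _ \<longleftrightarrow>
     continuous_on UNIV (\<lambda>p::'a \<times> 'a. fst p + snd p) \<and>
     continuous_on UNIV (\<lambda>p::real \<times> 'a. fst p *\<^sub>R snd p)"

definition borel_probs :: "'a::topological_space measure set" where
  "borel_probs = {M. sets M = sets borel \<and> prob_space M}"

definition inv_probs :: "('a::topological_space \<Rightarrow> 'a) \<Rightarrow> 'a measure set" where
  "inv_probs T = {M \<in> borel_probs. distr M borel T = M}"

definition full_support :: "'a::topological_space measure \<Rightarrow> bool" where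
  "full_support M \<longleftrightarrow> (\<forall>U. open U \<and> U \<noteq> {} \<longrightarrow> emeasure M U > 0)"

definition inv_probs_full :: "('a::topological_space \<Rightarrow> 'a) \<Rightarrow> 'a measure set" where
  "inv_probs_full T = {M \<in> inv_probs T. full_support M}"

definition inv_probs_full_on :: "('a::topological_space \<Rightarrow> 'a) \<Rightarrow> 'a set \<Rightarrow> 'a measure set" where
  "inv_probs_full_on T A = {M \<in> inv_probs_full T. emeasure M A = 1}"

definition eps_nbhd :: "'a::metric_space set \<Rightarrow> real \<Rightarrow> 'a set" where
  "eps_nbhd A e = {x. \<exists>a\<in>A. dist x a < e}"

definition prokhorov_dist :: "'a::metric_space measure \<Rightarrow> 'a measure \<Rightarrow> real" where
  "prokhorov_dist M N = Inf {e. e > 0 \<and> (\<forall>A\<in>sets borel.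
      measure M A \<le> measure N (eps_nbhd A e) + e \<and>
      measure N A \<le> measure M (eps_nbhd A e) + e)}"

definition prokhorov_topology :: "'a::metric_space measure topology" where
  "prokhorov_topology = topology (\<lambda>U. U \<subseteq> borel_probs \<and>
      (\<forall>M\<in>U. \<exists>e>0. \<forall>N\<in>borel_probs. prokhorov_dist M N < e \<longrightarrow> N \<in> U))"

definition ker_star :: "('a::real_vector \<Rightarrow> 'a) \<Rightarrow> 'a set" where
  "ker_star T = (\<Union>k::nat. {x. (T ^^ k) x = 0})"

definition set_diffs :: "'a::real_vector set \<Rightarrow> 'a set" where
  "set_diffs F = {x - y | x y. x \<in> F \<and> y \<in> F}"

definition dilation_invariant :: "'a::real_vector set \<Rightarrow> bool" where
  "dilation_invariant A \<longleftrightarrow> (\<forall>r>0. (\<lambda>x. r *\<^sub>R x) ` A = A)"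

definition nowhere_dense :: "'a::topological_space set \<Rightarrow> bool" where
  "nowhere_dense A \<longleftrightarrow> interior (closure A) = {}"

end

theory Submission
  imports Defs
begin


lemma istop_prok: "istopology (\<lambda>U. U \<subseteq> (borel_probs::'a::metric_space measure set) \<and>
      (\<forall>M\<in>U. \<exists>e>0. \<forall>N\<in>borel_probs. prokhorov_dist M N < e \<longrightarrow> N \<in> U))"
  unfolding istopology_def
proof safe
  fix S T and M :: "'a measure"
  assume "S \<subseteq> borel_probs" "\<forall>M\<in>S. \<exists>e>0. \<forall>N\<in>borel_probs. prokhorov_dist M N < e \<longrightarrow> N \<in> S"
    "T \<subseteq> borel_probs" "\<forall>M\<in>T. \<exists>e>0. \<forall>N\<in>borel_probs. prokhorov_dist M N < e \<longrightarrow> N \<in> T"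
    "M \<in> S" "M \<in> T"
  then obtain e1 e2 where "e1 > 0" "e2 > 0" "\<forall>N\<in>borel_probs. prokhorov_dist M N < e1 \<longrightarrow> N \<in> S"
     "\<forall>N\<in>borel_probs. prokhorov_dist M N < e2 \<longrightarrow> N \<in> T" by meson
  then show "\<exists>e>0. \<forall>N\<in>borel_probs. prokhorov_dist M N < e \<longrightarrow> N \<in> S \<inter> T"
    by (intro exI[of _ "min e1 e2"]) auto
next
  fix K and M :: "'a measure" and U
  assume "\<forall>K\<in>K. K \<subseteq> borel_probs \<and> (\<forall>M\<in>K. \<exists>e>0. \<forall>N\<in>borel_probs. prokhorov_dist M N < e \<longrightarrow> N \<in> K)"
    "M \<in> U" "U \<in> K"
  then obtain e where "e>0" "\<forall>N\<in>borel_probs. prokhorov_dist M N < e \<longrightarrow> N \<in> U" by meson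
  then show "\<exists>e>0. \<forall>N\<in>borel_probs. prokhorov_dist M N < e \<longrightarrow> N \<in> \<Union> K" using \<open>U \<in> K\<close> by blast
next
  fix K x X assume "\<forall>K\<in>K. K \<subseteq> borel_probs \<and> (\<forall>M\<in>K. \<exists>e>0. \<forall>N\<in>borel_probs. prokhorov_dist M N < e \<longrightarrow> N \<in> K)"
    "x \<in> X" "X \<in> K"
  then show "x \<in> borel_probs" by auto
qed auto

lemma openin_prok: "openin prokhorov_topology U \<longleftrightarrow> U \<subseteq> borel_probs \<and>
      (\<forall>M\<in>U. \<exists>e>0. \<forall>N\<in>borel_probs. prokhorov_dist M N < e \<longrightarrow> N \<in> U)"
  unfolding prokhorov_topology_def by (subst topology_inverse'[OF istop_prok]) simp

lemma topspace_prok: "topspace prokhorov_topology = borel_probs"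
proof -
  have "openin prokhorov_topology borel_probs" unfolding openin_prok by (auto intro: exI[of _ 1])
  then have "borel_probs \<subseteq> topspace prokhorov_topology" by (rule openin_subset)
  moreover have "topspace prokhorov_topology \<subseteq> borel_probs"
    unfolding topspace_def openin_prok by auto
  ultimately show ?thesis by auto
qed



lemma eps_nbhd_mono: "e1 \<le> e2 \<Longrightarrow> eps_nbhd A e1 \<subseteq> eps_nbhd A e2"
  unfolding eps_nbhd_def by force

lemma open_eps_nbhd: "open (eps_nbhd A e)"
proof -
  have "eps_nbhd A e = (\<Union>a\<in>A. ball a e)" unfolding eps_nbhd_def ball_def
    by (auto simp: dist_commute)
  then show ?thesis by auto
qed

lemma eps_nbhd_borel[measurable]: "eps_nbhd A e \<in> sets borel"
  by (rule borel_open[OF open_eps_nbhd])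

lemma borel_probsD: "M \<in> borel_probs \<Longrightarrow> sets M = sets borel \<and> prob_space M"
  unfolding borel_probs_def by auto

lemma pd_le:
  fixes M N :: "'a::metric_space measure"
  assumes "e > 0" "\<And>A. A \<in> sets borel \<Longrightarrow> measure M A \<le> measure N (eps_nbhd A e) + e \<and>
      measure N A \<le> measure M (eps_nbhd A e) + e"
  shows "prokhorov_dist M N \<le> e"
  unfolding prokhorov_dist_def
  by (rule cInf_lower) (use assms in \<open>auto intro!: bdd_belowI[of _ 0]\<close>)

lemma pd_lt:
  fixes M N :: "'a::metric_space measure"
  assumes "M \<in> borel_probs" "N \<in> borel_probs" "prokhorov_dist M N < e"
  shows "\<exists>e'. 0 < e' \<and> e' < e \<and> (\<forall>A\<in>sets borel. measure M A \<le> measure N (eps_nbhd A e') + e' \<and>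
      measure N A \<le> measure M (eps_nbhd A e') + e')"
proof -
  have pM: "prob_space M" and pN: "prob_space N" using assms borel_probsD by blast+
  have "1 \<in> {e. e > 0 \<and> (\<forall>A\<in>sets borel.
      measure M A \<le> measure N (eps_nbhd A e) + e \<and>
      measure N A \<le> measure M (eps_nbhd A e) + e)}"
    using prob_space.prob_le_1[OF pM] prob_space.prob_le_1[OF pN]
    by (auto intro: order_trans[OF _ le_add_same_cancel2[THEN iffD2]])
  then have "{e. e > 0 \<and> (\<forall>A\<in>sets borel.
      measure M A \<le> measure N (eps_nbhd A e) + e \<and>
      measure N A \<le> measure M (eps_nbhd A e) + e)} \<noteq> {}" by blast
  from cInf_lessD[OF this assms(3)[unfolded prokhorov_dist_def]] show ?thesis by blast
qed

lemma open_lt: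
  fixes C :: "'a::metric_space set"
  assumes "closed C"
  shows "openin prokhorov_topology {M\<in>borel_probs. measure M C < c}"
  unfolding openin_prok
proof safe
  fix M assume M: "M \<in> borel_probs" "measure M C < c"
  then have sM: "sets M = sets borel" and pM: "prob_space M" using borel_probsD by blast+
  interpret prob_space M by fact
  define d where "d = c - measure M C"
  have d: "d > 0" using M d_def by auto
  define Ck where "Ck k = eps_nbhd C (1 / Suc k)" for k :: nat
  have Cks: "range Ck \<subseteq> sets M" unfolding Ck_def sM by auto
  have "decseq Ck" unfolding Ck_def decseq_def
    by (intro allI impI eps_nbhd_mono) (auto simp: frac_le)
  have "(\<Inter>k. Ck k) = C"
  proof
    show "C \<subseteq> (\<Inter>k. Ck k)" unfolding Ck_def eps_nbhd_def by force
    show "(\<Inter>k. Ck k) \<subseteq> C"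
    proof
      fix x assume x: "x \<in> (\<Inter>k. Ck k)"
      have "x \<in> closure C" unfolding closure_approachable
      proof (intro allI impI)
        fix \<epsilon> :: real assume "\<epsilon> > 0"
        then obtain k where k: "1 / Suc k < \<epsilon>" using nat_approx_posE by blast
        from x have "x \<in> Ck k" by auto
        then obtain a where "a \<in> C" "dist x a < 1 / Suc k" unfolding Ck_def eps_nbhd_def by auto
        then show "\<exists>y\<in>C. dist y x < \<epsilon>" using k by (intro bexI[of _ a]) (auto simp: dist_commute)
      qed
      then show "x \<in> C" using assms by (simp add: closure_closed)
    qed
  qed
  with finite_Lim_measure_decseq[OF Cks \<open>decseq Ck\<close>]
  have "(\<lambda>k. measure M (Ck k)) \<longlonglongrightarrow> measure M C" by simp
  then have "eventually (\<lambda>k. measure M (Ck k) < measure M C + d/2) sequentially"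
    using d by (intro order_tendstoD) auto
  then obtain k where k: "measure M (Ck k) < measure M C + d/2"
    by (auto simp: eventually_sequentially)
  show "\<exists>e>0. \<forall>N\<in>borel_probs. prokhorov_dist M N < e \<longrightarrow> N \<in> {M \<in> borel_probs. measure M C < c}"
  proof (intro exI[of _ "min (1 / Suc k) (d/2)"] conjI ballI impI)
    show "0 < min (1 / Suc k) (d/2)" using d by auto
    fix N assume N: "N \<in> borel_probs" "prokhorov_dist M N < min (1 / Suc k) (d/2)"
    from pd_lt[OF M(1) N] obtain e' where e': "0 < e'" "e' < min (1 / Suc k) (d/2)"
      "\<forall>A\<in>sets borel. measure M A \<le> measure N (eps_nbhd A e') + e' \<and>
      measure N A \<le> measure M (eps_nbhd A e') + e'" by blast
    have "C \<in> sets borel" using assms by auto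
    then have "measure N C \<le> measure M (eps_nbhd C e') + e'" using e' by blast
    also have "measure M (eps_nbhd C e') \<le> measure M (Ck k)"
      unfolding Ck_def using e' by (intro finite_measure_mono eps_nbhd_mono) (auto simp: sM)
    finally have "measure N C < c" using k e' d_def by linarith
    then show "N \<in> {M \<in> borel_probs. measure M C < c}" using N by auto
  qed
qed



lemma inv_probs_sub: "inv_probs T \<subseteq> borel_probs" unfolding inv_probs_def by auto

lemma prob_emeasure_eq_1_iff:
  assumes "prob_space M" "sets M = sets (borel::'a::topological_space measure)" "closed F"
  shows "emeasure M (UNIV - F) = 1 \<longleftrightarrow> measure M F = 0"
proof -
  interpret prob_space M by fact
  have sp: "space M = UNIV" using sets_eq_imp_space_eq[OF assms(2)] by simp
  have Fs: "F \<in> events" using assms by (simp add: borel_closed)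
  have "emeasure M (UNIV - F) = ennreal (measure M (UNIV - F))" by (simp add: emeasure_eq_measure)
  also have "measure M (UNIV - F) = 1 - measure M F" using prob_compl[OF Fs] sp by simp
  finally have "emeasure M (UNIV - F) = ennreal (1 - measure M F)" .
  moreover have "0 \<le> 1 - measure M F" using prob_le_1[of F] by simp
  ultimately show ?thesis by (simp add: ennreal_1[symmetric] del: ennreal_1)
qed

lemma gdelta_part:
  fixes T :: "'a::{metric_space, second_countable_topology} \<Rightarrow> 'a" and F :: "'a set"
  assumes "closed F"
  shows "gdelta_in (subtopology prokhorov_topology (inv_probs T)) (inv_probs_full_on T (UNIV - F))"
proof -
  obtain Bas :: "'a set set" where Bas: "countable Bas" "topological_basis Bas"
    using ex_countable_basis by blast
  define Fam where "Fam = range (\<lambda>k::nat. {M\<in>borel_probs. measure M F < 1/Suc k}) \<union>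
     (\<lambda>B. {M\<in>borel_probs. measure M (-B) < 1}) ` (Bas - {{}})"
  have cnt: "countable Fam" unfolding Fam_def using Bas by auto
  have opn: "openin prokhorov_topology Q" if "Q \<in> Fam" for Q
    using that unfolding Fam_def
  proof (elim UnE imageE)
    fix k assume "Q = {M\<in>borel_probs. measure M F < 1/Suc k}"
    then show ?thesis using open_lt[OF assms] by simp
  next
    fix B assume "Q = {M\<in>borel_probs. measure M (-B) < 1}" "B \<in> Bas - {{}}"
    then show ?thesis using open_lt[of "-B"] topological_basis_open[OF Bas(2)] by auto
  qed
  have eq: "inv_probs_full_on T (UNIV - F) = inv_probs T \<inter> \<Inter> Fam"
  proof (intro set_eqI iffI)
    fix M assume M: "M \<in> inv_probs_full_on T (UNIV - F)"
    then have Mi: "M \<in> inv_probs T" and fs: "full_support M" and e1: "emeasure M (UNIV - F) = 1"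
      unfolding inv_probs_full_on_def inv_probs_full_def by auto
    then have Mb: "M \<in> borel_probs" using inv_probs_sub by auto
    then have sM: "sets M = sets borel" and pM: "prob_space M" using borel_probsD by blast+
    interpret prob_space M by fact
    have F0: "measure M F = 0" using prob_emeasure_eq_1_iff[OF pM sM assms] e1 by simp
    have "M \<in> Q" if "Q \<in> Fam" for Q
    proof -
      { fix B assume B: "B \<in> Bas" "B \<noteq> {}"
        have oB: "open B" using B Bas(2) topological_basis_open by blast
        have "emeasure M B > 0" using fs oB B unfolding full_support_def by auto
        then have "measure M B > 0" by (simp add: emeasure_eq_measure)
        moreover have "measure M (-B) = 1 - measure M B"
          using prob_compl[of B] oB sets_eq_imp_space_eq[OF sM] sM
          by (simp add: Compl_eq_Diff_UNIV)
        ultimately have "measure M (-B) < 1" by simp }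
      then show ?thesis using that unfolding Fam_def
      proof (elim UnE imageE)
        fix k assume "Q = {M\<in>borel_probs. measure M F < 1/Suc k}"
        then show ?thesis using Mb F0 by simp
      next
        fix B assume "Q = {M\<in>borel_probs. measure M (-B) < 1}" "B \<in> Bas - {{}}"
        then show ?thesis using Mb \<open>\<And>B. B \<in> Bas \<Longrightarrow> B \<noteq> {} \<Longrightarrow> measure M (-B) < 1\<close> by auto
      qed
    qed
    then show "M \<in> inv_probs T \<inter> \<Inter> Fam" using Mi by auto
  next
    fix M assume M: "M \<in> inv_probs T \<inter> \<Inter> Fam"
    then have Mi: "M \<in> inv_probs T" by auto
    then have Mb: "M \<in> borel_probs" using inv_probs_sub by auto
    then have sM: "sets M = sets borel" and pM: "prob_space M" using borel_probsD by blast+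
    interpret prob_space M by fact
    have "measure M F < 1/Suc k" for k
    proof -
      have "{M\<in>borel_probs. measure M F < 1/Suc k} \<in> Fam" unfolding Fam_def by blast
      then show ?thesis using M by blast
    qed
    then have "measure M F = 0"
    proof (rule_tac ccontr)
      assume "\<And>k. measure M F < 1/Suc k" "measure M F \<noteq> 0"
      then have "measure M F > 0" using measure_nonneg[of M F] by linarith
      then obtain k where "1 / Suc k < measure M F" using nat_approx_posE by blast
      then show False using \<open>\<And>k. measure M F < 1/Suc k\<close>[of k] by linarith
    qed
    then have e1: "emeasure M (UNIV - F) = 1" using prob_emeasure_eq_1_iff[OF pM sM assms] by simp
    have fs: "full_support M" unfolding full_support_def
    proof (intro allI impI)
      fix U :: "'a set" assume U: "open U \<and> U \<noteq> {}"
      then obtain x where "x \<in> U" by auto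
      then obtain B where B: "B \<in> Bas" "x \<in> B" "B \<subseteq> U"
        using topological_basisE[OF Bas(2)] U by metis
      have oB: "open B" using B Bas(2) topological_basis_open by blast
      have "{M\<in>borel_probs. measure M (-B) < 1} \<in> Fam" unfolding Fam_def using B U by blast
      then have "measure M (-B) < 1" using M by blast
      moreover have "measure M (-B) = 1 - measure M B"
        using prob_compl[of B] oB sets_eq_imp_space_eq[OF sM] sM
        by (simp add: Compl_eq_Diff_UNIV)
      ultimately have "measure M B > 0" by simp
      then have "emeasure M B > 0" by (simp add: emeasure_eq_measure)
      also have "emeasure M B \<le> emeasure M U" using B U sM by (intro emeasure_mono) auto
      finally show "emeasure M U > 0" .
    qed
    show "M \<in> inv_probs_full_on T (UNIV - F)"
      unfolding inv_probs_full_on_def inv_probs_full_def using Mi fs e1 by auto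
  qed
  show ?thesis unfolding gdelta_in_alt
  proof
    show "inv_probs_full_on T (UNIV - F) \<subseteq> topspace (subtopology prokhorov_topology (inv_probs T))"
      using eq inv_probs_sub by (auto simp: topspace_prok)
    show "(countable intersection_of openin (subtopology prokhorov_topology (inv_probs T)))
       (inv_probs_full_on T (UNIV - F))"
      unfolding intersection_of_def
    proof (intro exI[of _ "(\<lambda>Q. Q \<inter> inv_probs T) ` Fam"] conjI)
      show "countable ((\<lambda>Q. Q \<inter> inv_probs T) ` Fam)" using cnt by auto
      show "(\<lambda>Q. Q \<inter> inv_probs T) ` Fam \<subseteq> Collect (openin (subtopology prokhorov_topology (inv_probs T)))"
      proof
        fix Q' assume "Q' \<in> (\<lambda>Q. Q \<inter> inv_probs T) ` Fam"
        then obtain Q where "Q \<in> Fam" "Q' = Q \<inter> inv_probs T" by blast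
        then show "Q' \<in> Collect (openin (subtopology prokhorov_topology (inv_probs T)))"
          using opn unfolding openin_subtopology by auto
      qed
      have "Fam \<noteq> {}" unfolding Fam_def by auto
      then show "\<Inter> ((\<lambda>Q. Q \<inter> inv_probs T) ` Fam) = inv_probs_full_on T (UNIV - F)"
        unfolding eq by auto
    qed
  qed
qed



lemma funpow_cont:
  fixes T :: "'a::topological_space \<Rightarrow> 'a"
  shows "continuous_on UNIV T \<Longrightarrow> continuous_on UNIV (T ^^ k)"
proof (induction k)
  case 0 then show ?case by (simp add: continuous_on_id funpow.simps(1) id_def)
next
  case (Suc k)
  then have "continuous_on UNIV (T ^^ k)" by simp
  then show ?case unfolding funpow_Suc_right
    by (intro continuous_on_compose Suc.prems) (auto intro: continuous_on_subset)
qed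

lemma funpow_zero:
  fixes T :: "'a::real_vector \<Rightarrow> 'a"
  shows "linear T \<Longrightarrow> (T ^^ k) 0 = 0"
  by (induction k) (auto simp: linear_0 funpow.simps)

lemma restrict_good:
  fixes T :: "'a::{metric_space, real_vector} \<Rightarrow> 'a"
  assumes lin: "linear T" and cont: "continuous_on UNIV T" and mu: "\<mu> \<in> inv_probs_full T"
    and D: "closed D" "interior D = {}" "D \<noteq> {} \<Longrightarrow> 0 \<in> D" "T ` (D - ker_star T) \<subseteq> D"
  shows "uniform_measure \<mu> (-D) \<in> inv_probs_full T \<and> emeasure (uniform_measure \<mu> (-D)) D = 0"
proof -
  have mi: "\<mu> \<in> inv_probs T" and fs: "full_support \<mu>" using mu unfolding inv_probs_full_def by auto
  then have inv: "distr \<mu> borel T = \<mu>" and mb: "\<mu> \<in> borel_probs" unfolding inv_probs_def by auto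
  then have sM: "sets \<mu> = sets borel" and pM: "prob_space \<mu>" using borel_probsD by blast+
  interpret prob_space \<mu> by fact
  have sp: "space \<mu> = UNIV" using sets_eq_imp_space_eq[OF sM] by simp
  have Tm: "T \<in> borel_measurable borel" by (rule borel_measurable_continuous_onI[OF cont])
  have Tinv: "emeasure \<mu> (T -` A) = emeasure \<mu> A" if "A \<in> sets borel" for A
  proof -
    have "emeasure \<mu> A = emeasure (distr \<mu> borel T) A" using inv by simp
    also have "\<dots> = emeasure \<mu> (T -` A \<inter> space \<mu>)"
      by (rule emeasure_distr) (use Tm that in \<open>auto simp: measurable_cong_sets[OF sM refl]\<close>)
    finally show ?thesis using sp by simp
  qed
  define K where "K k = (T ^^ k) -` {0}" for k
  have Kb: "K k \<in> sets borel" for k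
  proof -
    have "(T ^^ k) \<in> borel_measurable borel" by (rule borel_measurable_continuous_onI[OF funpow_cont[OF cont]])
    then show ?thesis unfolding K_def using measurable_sets[of "T ^^ k" borel borel "{0}"] by simp
  qed
  have KS: "K (Suc k) = T -` K k" for k unfolding K_def funpow_Suc_right comp_def by auto
  have Kmeas: "emeasure \<mu> (K k) = emeasure \<mu> {0}" for k
  proof (induction k)
    case 0 then show ?case by (simp add: K_def)
  next
    case (Suc k) then show ?case using Tinv[OF Kb[of k]] KS by simp
  qed
  have K0: "0 \<in> K k" for k unfolding K_def using funpow_zero[OF lin] by simp
  have Knull: "K k - {0} \<in> null_sets \<mu>" for k
  proof -
    have "measure \<mu> (K k - {0}) = measure \<mu> (K k) - measure \<mu> {0}"
      using K0 Kb sM by (intro finite_measure_Diff) auto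
    also have "\<dots> = 0" using Kmeas[of k] by (simp add: measure_def)
    finally show ?thesis using Kb sM by (auto simp: emeasure_eq_measure null_sets_def)
  qed
  have Db: "D \<in> sets borel" using D(1) by (simp add: borel_closed)
  have TDb: "T -` D \<in> sets borel" using measurable_sets[OF Tm Db] by simp
  have N1: "D - T -` D \<in> null_sets \<mu>"
  proof (rule null_sets_subset)
    show "(\<Union>k. K k - {0}) \<in> null_sets \<mu>" using Knull by blast
    show "D - T -` D \<in> sets \<mu>" using Db TDb sM by auto
    show "D - T -` D \<subseteq> (\<Union>k. K k - {0})"
    proof
      fix x assume x: "x \<in> D - T -` D"
      then have "x \<in> ker_star T" using D(4) by auto
      then obtain k where "x \<in> K k" unfolding ker_star_def K_def by auto
      moreover have "x \<noteq> 0" using x D(3) lin by (auto simp: linear_0)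
      ultimately show "x \<in> (\<Union>k. K k - {0})" by auto
    qed
  qed
  have N2: "T -` D - D \<in> null_sets \<mu>"
  proof -
    have "measure \<mu> (T -` D - D) = measure \<mu> (T -` D) - measure \<mu> (T -` D \<inter> D)"
      using Db TDb sM by (intro finite_measure_Diff') auto
    also have "measure \<mu> (T -` D) = measure \<mu> D" using Tinv[OF Db] by (simp add: measure_def)
    also have "measure \<mu> D - measure \<mu> (T -` D \<inter> D) = measure \<mu> (D - T -` D)"
      using Db TDb sM by (subst finite_measure_Diff') (auto simp: Int_commute)
    also have "\<dots> = 0" using N1 by (simp add: measure_def null_sets_def)
    finally show ?thesis using Db TDb sM by (auto simp: emeasure_eq_measure null_sets_def)
  qed
  define Nn where "Nn = (D - T -` D) \<union> (T -` D - D)"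
  have Nn: "Nn \<in> null_sets \<mu>" unfolding Nn_def using N1 N2 by auto
  have oD: "open (-D)" using D(1) by auto
  have pos: "emeasure \<mu> (-D \<inter> U) > 0" if "open U" "U \<noteq> {}" for U
  proof -
    have "\<not> U \<subseteq> D" using D(2) that interior_maximal[of U D] by auto
    then have "-D \<inter> U \<noteq> {}" by auto
    then show ?thesis using fs oD that unfolding full_support_def by auto
  qed
  have posD: "emeasure \<mu> (-D) > 0" using pos[of UNIV] by simp
  have Dcs: "-D \<in> sets \<mu>" using Db sM by auto
  define \<nu> where "\<nu> = uniform_measure \<mu> (-D)"
  have snu: "sets \<nu> = sets borel" unfolding \<nu>_def using sM by simp
  have spnu: "space \<nu> = UNIV" using sets_eq_imp_space_eq[OF snu] by simp
  have pnu: "prob_space \<nu>" unfolding \<nu>_def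
    using posD by (intro prob_space_uniform_measure) auto
  have fsnu: "full_support \<nu>" unfolding full_support_def
  proof (intro allI impI)
    fix U :: "'a set" assume U: "open U \<and> U \<noteq> {}"
    then have "U \<in> sets \<mu>" using sM by auto
    then have "emeasure \<nu> U = emeasure \<mu> (-D \<inter> U) / emeasure \<mu> (-D)"
      unfolding \<nu>_def using Dcs by simp
    moreover have "emeasure \<mu> (-D) \<noteq> top" by simp
    ultimately show "emeasure \<nu> U > 0" using pos[of U] U by (simp add: less_le)
  qed
  have nuD: "emeasure \<nu> D = 0" unfolding \<nu>_def using Db sM Dcs by simp
  have invnu: "distr \<nu> borel T = \<nu>"
  proof (rule measure_eqI)
    show "sets (distr \<nu> borel T) = sets \<nu>" using snu by simp
    fix A assume "A \<in> sets (distr \<nu> borel T)"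
    then have Ab: "A \<in> sets borel" by simp
    have TAb: "T -` A \<in> sets borel" using measurable_sets[OF Tm Ab] by simp
    have "emeasure (distr \<nu> borel T) A = emeasure \<nu> (T -` A \<inter> space \<nu>)"
      by (rule emeasure_distr) (use Tm Ab in \<open>auto simp: measurable_cong_sets[OF snu refl]\<close>)
    also have "\<dots> = emeasure \<mu> (-D \<inter> T -` A) / emeasure \<mu> (-D)"
      unfolding spnu \<nu>_def using TAb sM Dcs by simp
    also have "emeasure \<mu> (-D \<inter> T -` A) = emeasure \<mu> (-D \<inter> A)"
    proof -
      have "emeasure \<mu> (-D \<inter> A) = emeasure \<mu> (T -` (-D \<inter> A))"
        using Tinv[of "-D \<inter> A"] Db Ab by auto
      also have "T -` (-D \<inter> A) = - (T -` D) \<inter> T -` A" by auto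
      also have "emeasure \<mu> (- (T -` D) \<inter> T -` A) = emeasure \<mu> (- (T -` D) \<inter> T -` A - Nn)"
        using Nn TDb TAb sM by (intro emeasure_Diff_null_set[symmetric]) auto
      also have "- (T -` D) \<inter> T -` A - Nn = -D \<inter> T -` A - Nn" unfolding Nn_def by auto
      also have "emeasure \<mu> (-D \<inter> T -` A - Nn) = emeasure \<mu> (-D \<inter> T -` A)"
        using Nn Db TAb sM by (intro emeasure_Diff_null_set) auto
      finally show ?thesis ..
    qed
    also have "emeasure \<mu> (-D \<inter> A) / emeasure \<mu> (-D) = emeasure \<nu> A"
      unfolding \<nu>_def using Ab sM Dcs by simp
    finally show "emeasure (distr \<nu> borel T) A = emeasure \<nu> A" .
  qed
  have "\<nu> \<in> inv_probs_full T"
    unfolding inv_probs_full_def inv_probs_def borel_probs_def using snu pnu invnu fsnu by auto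
  then show ?thesis using nuD unfolding \<nu>_def by simp
qed



lemma tvs_add_cont:
  fixes f g :: "'b::topological_space \<Rightarrow> 'a::{real_vector, topological_space}"
  assumes tvs: "tvs_ops_continuous TYPE('a)" and f: "continuous_on S f" and g: "continuous_on S g"
  shows "continuous_on S (\<lambda>x. f x + g x)"
proof -
  have c: "continuous_on UNIV (\<lambda>p::'a \<times> 'a. fst p + snd p)" using tvs unfolding tvs_ops_continuous_def by simp
  have "continuous_on S ((\<lambda>p::'a \<times> 'a. fst p + snd p) \<circ> (\<lambda>x. (f x, g x)))"
    by (rule continuous_on_compose[OF continuous_on_Pair[OF f g]]) (rule continuous_on_subset[OF c], simp)
  then show ?thesis by (simp add: comp_def)
qed

lemma tvs_scale_cont:
  fixes f :: "'b::topological_space \<Rightarrow> real" and g :: "'b \<Rightarrow> 'a::{real_vector, topological_space}"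
  assumes tvs: "tvs_ops_continuous TYPE('a)" and f: "continuous_on S f" and g: "continuous_on S g"
  shows "continuous_on S (\<lambda>x. f x *\<^sub>R g x)"
proof -
  have c: "continuous_on UNIV (\<lambda>p::real \<times> 'a. fst p *\<^sub>R snd p)" using tvs unfolding tvs_ops_continuous_def by simp
  have "continuous_on S ((\<lambda>p::real \<times> 'a. fst p *\<^sub>R snd p) \<circ> (\<lambda>x. (f x, g x)))"
    by (rule continuous_on_compose[OF continuous_on_Pair[OF f g]]) (rule continuous_on_subset[OF c], simp)
  then show ?thesis by (simp add: comp_def)
qed

definition gmap :: "real \<Rightarrow> 'a::real_vector \<times> 'a \<times> real \<Rightarrow> 'a" where
  "gmap r \<omega> = fst \<omega> + (snd (snd \<omega>) / r) *\<^sub>R fst (snd \<omega>)"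

lemma gmap_cont:
  fixes r :: real
  assumes tvs: "tvs_ops_continuous TYPE('a::{real_vector, topological_space})"
  shows "continuous_on UNIV (gmap r :: 'a \<times> 'a \<times> real \<Rightarrow> 'a)"
proof -
  have d: "continuous_on UNIV (\<lambda>\<omega>::'a \<times> 'a \<times> real. snd (snd \<omega>) / r)"
    unfolding divide_inverse
    by (intro continuous_on_mult_right continuous_on_snd continuous_on_id)
  show ?thesis unfolding gmap_def
    by (intro tvs_add_cont[OF tvs] tvs_scale_cont[OF tvs] d continuous_on_fst continuous_on_snd
      continuous_on_id)
qed

definition Unif :: "real measure" where "Unif = uniform_measure lborel {0..1}"

lemma Unif_prob: "prob_space Unif"
  unfolding Unif_def by (intro prob_space_uniform_measure) auto

lemma sets_Unif[simp, measurable_cong]: "sets Unif = sets borel"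
  unfolding Unif_def by simp

lemma Unif_singleton: "emeasure Unif {t} = 0"
proof -
  have "emeasure Unif {t} = emeasure lborel ({0..1} \<inter> {t}) / emeasure lborel {0..1::real}"
    unfolding Unif_def by (intro emeasure_uniform_measure) auto
  also have "emeasure lborel ({0..1} \<inter> {t}) = 0"
    using emeasure_mono[of "{0..1} \<inter> {t}" "{t}" lborel] by auto
  finally show ?thesis by simp
qed

lemma Unif_open_pos:
  assumes "open B" "1/2 \<in> B"
  shows "emeasure Unif B > 0"
proof -
  obtain \<epsilon> where e: "\<epsilon> > 0" "ball (1/2) \<epsilon> \<subseteq> B" using assms open_contains_ball by blast
  define \<delta> where "\<delta> = min \<epsilon> (1/2) / 2"
  have d: "\<delta> > 0" "\<delta> < \<epsilon>" "\<delta> \<le> 1/4" using e unfolding \<delta>_def by auto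
  have sub: "{1/2 .. 1/2 + \<delta>} \<subseteq> {0..1} \<inter> B"
  proof
    fix x :: real assume "x \<in> {1/2 .. 1/2 + \<delta>}"
    then have "x \<in> {0..1}" "dist (1/2) x < \<epsilon>" using d by (auto simp: dist_real_def)
    then show "x \<in> {0..1} \<inter> B" using e by auto
  qed
  have "emeasure Unif B = emeasure lborel ({0..1} \<inter> B) / emeasure lborel {0..1::real}"
    unfolding Unif_def using assms by (intro emeasure_uniform_measure) auto
  also have "\<dots> = emeasure lborel ({0..1} \<inter> B)" by (simp add: divide_ennreal_def)
  also have "emeasure lborel {1/2 .. 1/2 + \<delta>} \<le> \<dots>"
    using sub assms by (intro emeasure_mono) auto
  finally have le: "ennreal \<delta> \<le> emeasure Unif B" using d by simp
  have "0 < ennreal \<delta>" using d by simp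
  then show ?thesis using le by (rule less_le_trans)
qed



locale cons =
  fixes T :: "'a::{polish_space, real_vector} \<Rightarrow> 'a" and F D :: "'a set" and m \<nu> :: "'a measure"
  assumes tvs: "tvs_ops_continuous TYPE('a)" and lin: "linear T" and cont: "continuous_on UNIV T"
    and m: "m \<in> inv_probs T" and nu: "\<nu> \<in> inv_probs_full T" and nuD: "emeasure \<nu> D = 0"
    and closedD: "closed D" and closedF: "closed F"
    and sub: "set_diffs F \<subseteq> D" and dil: "dilation_invariant (set_diffs F)"
begin

abbreviation "N \<equiv> \<nu> \<Otimes>\<^sub>M Unif"
abbreviation "P \<equiv> m \<Otimes>\<^sub>M N"
definition "Z r = distr P borel (gmap r)"

lemma Tm[measurable]: "T \<in> borel_measurable borel"
  by (rule borel_measurable_continuous_onI[OF cont])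

lemma m_facts: "sets m = sets borel" "prob_space m" "distr m borel T = m" "space m = UNIV"
  using m borel_probsD[of m] sets_eq_imp_space_eq[of m borel] unfolding inv_probs_def by auto

lemma nu_facts: "sets \<nu> = sets borel" "prob_space \<nu>" "distr \<nu> borel T = \<nu>" "full_support \<nu>" "space \<nu> = UNIV"
  using nu borel_probsD[of \<nu>] sets_eq_imp_space_eq[of \<nu> borel]
  unfolding inv_probs_full_def inv_probs_def by auto

lemma sN0: "sets N = sets (borel \<Otimes>\<^sub>M borel)"
  using nu_facts(1) sets_Unif by (rule sets_pair_measure_cong)

lemma sN: "sets N = sets (borel :: ('a \<times> real) measure)"
  using sN0 borel_prod by metis

lemma sP0: "sets P = sets (borel \<Otimes>\<^sub>M (borel \<Otimes>\<^sub>M borel))"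
  by (rule sets_pair_measure_cong[OF m_facts(1) sN0])

lemma sP: "sets P = sets (borel :: ('a \<times> 'a \<times> real) measure)"
proof -
  have "sets P = sets (borel \<Otimes>\<^sub>M (borel :: ('a \<times> real) measure))"
    by (rule sets_pair_measure_cong[OF m_facts(1) sN])
  then show ?thesis using borel_prod by metis
qed

lemma spP: "space P = UNIV" using sets_eq_imp_space_eq[OF sP] by simp
lemma spN: "space N = UNIV" using sets_eq_imp_space_eq[OF sN] by simp

lemma pN: "prob_space N" by (intro prob_space_pair nu_facts Unif_prob)
lemma pP: "prob_space P" by (intro prob_space_pair m_facts pN)

lemma g_meas: "gmap r \<in> borel_measurable P"
  using borel_measurable_continuous_onI[OF gmap_cont[OF tvs]] measurable_cong_sets[OF sP refl] by blast

lemma g_meas0: "(gmap r :: 'a \<times> 'a \<times> real \<Rightarrow> 'a) \<in> borel_measurable (borel \<Otimes>\<^sub>M (borel \<Otimes>\<^sub>M borel))"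
  using g_meas by (simp add: measurable_cong_sets[OF sP0 refl])

lemma Z_bp: "Z r \<in> borel_probs"
  unfolding borel_probs_def Z_def using prob_space.prob_space_distr[OF pP g_meas] by simp

lemma N_inv: "distr N (borel \<Otimes>\<^sub>M borel) (\<lambda>(y, t). (T y, t)) = N"
proof -
  have "distr \<nu> borel T \<Otimes>\<^sub>M distr Unif borel (\<lambda>t. t) =
      distr (\<nu> \<Otimes>\<^sub>M Unif) (borel \<Otimes>\<^sub>M borel) (\<lambda>(x, y). (T x, y))"
  proof (rule pair_measure_distr)
    show "T \<in> measurable \<nu> borel" by (subst measurable_cong_sets[OF nu_facts(1) refl]) measurable
    show "(\<lambda>t. t) \<in> measurable Unif borel" by (subst measurable_cong_sets[OF sets_Unif refl]) measurable
    show "sigma_finite_measure (distr Unif borel (\<lambda>t. t))"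
      using distr_id2[of borel Unif] Unif_prob prob_space_imp_sigma_finite by simp
  qed
  moreover have "distr Unif borel (\<lambda>t. t) = Unif" by (rule distr_id2) simp
  ultimately show ?thesis using nu_facts(3) by simp
qed

definition "h = (\<lambda>(x, y). (T x, (\<lambda>(y, t). (T y, t)) y))"

lemma P_inv: "distr P (borel \<Otimes>\<^sub>M (borel \<Otimes>\<^sub>M borel)) h = P"
proof -
  have "distr m borel T \<Otimes>\<^sub>M distr N (borel \<Otimes>\<^sub>M borel) (\<lambda>(y, t). (T y, t)) =
      distr (m \<Otimes>\<^sub>M N) (borel \<Otimes>\<^sub>M (borel \<Otimes>\<^sub>M borel)) h"
    unfolding h_def
  proof (rule pair_measure_distr)
    show "T \<in> measurable m borel" by (subst measurable_cong_sets[OF m_facts(1) refl]) measurable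
    show "(\<lambda>(y, t). (T y, t)) \<in> measurable N (borel \<Otimes>\<^sub>M borel)"
      by (subst measurable_cong_sets[OF sN0 refl]) measurable
    show "sigma_finite_measure (distr N (borel \<Otimes>\<^sub>M borel) (\<lambda>(y, t). (T y, t)))"
      using N_inv pN prob_space_imp_sigma_finite by simp
  qed
  then show ?thesis using N_inv m_facts(3) by simp
qed

lemma h_meas: "h \<in> measurable P (borel \<Otimes>\<^sub>M (borel \<Otimes>\<^sub>M borel))"
  unfolding h_def by (subst measurable_cong_sets[OF sP0 refl]) measurable

lemma Z_inv: "distr (Z r) borel T = Z r"
proof -
  have "distr (Z r) borel T = distr P borel (T \<circ> gmap r)"
    unfolding Z_def by (rule distr_distr) (auto intro: g_meas)
  also have "\<dots> = distr P borel (gmap r \<circ> h)"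
    by (rule distr_cong) (auto simp: gmap_def h_def linear_add[OF lin] linear_scale[OF lin])
  also have "\<dots> = distr (distr P (borel \<Otimes>\<^sub>M (borel \<Otimes>\<^sub>M borel)) h) borel (gmap r)"
    by (rule distr_distr[symmetric]) (auto intro: g_meas0 h_meas)
  also have "\<dots> = Z r" unfolding P_inv Z_def ..
  finally show ?thesis .
qed


lemma section_small:
  assumes r: "r > 0" and y: "y \<notin> D"
  shows "emeasure Unif {t. x + (t/r) *\<^sub>R y \<in> F} = 0"
proof -
  define S where "S = {t. x + (t/r) *\<^sub>R y \<in> F}"
  have gen: "y \<in> set_diffs F" if ab: "a \<in> S" "b \<in> S" "a < b" for a b
  proof -
    define c where "c = (b - a) / r"
    have c: "c > 0" using ab r unfolding c_def by auto
    have "c *\<^sub>R y = (x + (b/r) *\<^sub>R y) - (x + (a/r) *\<^sub>R y)"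
      unfolding c_def by (simp add: diff_divide_distrib scaleR_diff_left)
    then have cy: "c *\<^sub>R y \<in> set_diffs F" using ab unfolding S_def set_diffs_def by blast
    have "(\<lambda>z. (1/c) *\<^sub>R z) ` set_diffs F = set_diffs F"
      using dil c unfolding dilation_invariant_def by auto
    moreover have "(1/c) *\<^sub>R (c *\<^sub>R y) = y" using c by simp
    ultimately show ?thesis using cy by (metis image_eqI)
  qed
  have sing: "t1 = t2" if "t1 \<in> S" "t2 \<in> S" for t1 t2
  proof (rule ccontr)
    assume "t1 \<noteq> t2"
    then have "y \<in> set_diffs F"
      using gen[OF that] gen[OF that(2,1)] by (cases "t1 < t2") auto
    then show False using y sub by auto
  qed
  show ?thesis
  proof (cases "S = {}")
    case True then show ?thesis unfolding S_def by simp
  next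
    case False
    then obtain t0 where "t0 \<in> S" by auto
    then have "S = {t0}" using sing by auto
    then show ?thesis using Unif_singleton unfolding S_def by simp
  qed
qed

lemma sfN: "sigma_finite_measure N" by (rule prob_space_imp_sigma_finite[OF pN])
lemma sfU: "sigma_finite_measure Unif" by (rule prob_space_imp_sigma_finite[OF Unif_prob])

lemma Z_F: assumes r: "r > 0" shows "emeasure (Z r) F = 0"
proof -
  define G where "G = gmap r -` F"
  have Fb: "F \<in> sets borel" using closedF by (simp add: borel_closed)
  have Gs: "G \<in> sets P" using measurable_sets[OF g_meas Fb] spP by (simp add: G_def)
  have ZF: "emeasure (Z r) F = emeasure P G" unfolding Z_def G_def
    using emeasure_distr[OF g_meas Fb] spP by simp
  have eq: "emeasure P G = (\<integral>\<^sup>+x. emeasure N (Pair x -` G) \<partial>m)"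
    by (rule sigma_finite_measure.emeasure_pair_measure_alt[OF sfN Gs])
  have inner: "emeasure N (Pair x -` G) = 0" for x
  proof -
    have Gx: "Pair x -` G \<in> sets N" by (rule sets_Pair1[OF Gs])
    have "emeasure N (Pair x -` G) = (\<integral>\<^sup>+y. emeasure Unif (Pair y -` (Pair x -` G)) \<partial>\<nu>)"
      by (rule sigma_finite_measure.emeasure_pair_measure_alt[OF sfU Gx])
    also have "\<dots> = (\<integral>\<^sup>+y. 0 \<partial>\<nu>)"
    proof (rule nn_integral_cong_AE)
      have Dn: "D \<in> null_sets \<nu>" using nuD closedD nu_facts(1) by (auto simp: null_sets_def borel_closed)
      have "AE y in \<nu>. y \<notin> D" by (rule AE_I'[OF Dn]) auto
      then show "AE y in \<nu>. emeasure Unif (Pair y -` (Pair x -` G)) = 0"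
      proof (rule eventually_mono)
        fix y assume "y \<notin> D"
        moreover have "Pair y -` (Pair x -` G) = {t. x + (t/r) *\<^sub>R y \<in> F}"
          unfolding G_def gmap_def by auto
        ultimately show "emeasure Unif (Pair y -` (Pair x -` G)) = 0" using section_small[OF r] by simp
      qed
    qed
    finally show ?thesis by simp
  qed
  show ?thesis using ZF eq inner by simp
qed

lemma Z_full: assumes r: "r > 0" shows "full_support (Z r)"
  unfolding full_support_def
proof (intro allI impI)
  fix V :: "'a set" assume V: "open V \<and> V \<noteq> {}"
  define G where "G = gmap r -` V"
  have Vb: "V \<in> sets borel" using V by auto
  have Gs: "G \<in> sets P" using measurable_sets[OF g_meas Vb] spP by (simp add: G_def)
  have ZV: "emeasure (Z r) V = emeasure P G" unfolding Z_def G_def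
    using emeasure_distr[OF g_meas Vb] spP by simp
  have eq: "emeasure P G = (\<integral>\<^sup>+x. emeasure N (Pair x -` G) \<partial>m)"
    by (rule sigma_finite_measure.emeasure_pair_measure_alt[OF sfN Gs])
  have pos: "emeasure N (Pair x -` G) > 0" for x
  proof -
    obtain v where v: "v \<in> V" using V by auto
    define W where "W = Pair x -` G"
    have Wc: "W = (\<lambda>p. x + (snd p / r) *\<^sub>R fst p) -` V" unfolding W_def G_def gmap_def by auto
    have "continuous_on UNIV (\<lambda>p::'a \<times> real. x + (snd p / r) *\<^sub>R fst p)"
      unfolding divide_inverse
      by (intro tvs_add_cont[OF tvs] tvs_scale_cont[OF tvs] continuous_on_const continuous_on_mult_right
          continuous_on_fst continuous_on_snd continuous_on_id)
    then have oW: "open W" unfolding Wc using V by (intro open_vimage) auto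
    define y0 where "y0 = (2*r) *\<^sub>R (v - x)"
    have c1: "(1/2/r) * (2*r) = 1" using r by simp
    have "x + ((1/2) / r) *\<^sub>R y0 = v" unfolding y0_def scaleR_scaleR c1 by simp
    then have "(y0, 1/2) \<in> W" unfolding Wc using v by simp
    then obtain A B where AB: "open A" "open B" "(y0, 1/2) \<in> A \<times> B" "A \<times> B \<subseteq> W"
      using open_prod_elim[OF oW] by blast
    have As: "A \<in> sets \<nu>" using AB nu_facts(1) by auto
    have Bs: "B \<in> sets Unif" using AB by auto
    have "emeasure \<nu> A > 0" using nu_facts(4) AB unfolding full_support_def by auto
    moreover have "emeasure Unif B > 0" using AB by (intro Unif_open_pos) auto
    ultimately have "0 < emeasure \<nu> A * emeasure Unif B" by (simp add: ennreal_zero_less_mult_iff)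
    also have "\<dots> = emeasure N (A \<times> B)"
      by (rule sigma_finite_measure.emeasure_pair_measure_Times[OF sfU As Bs, symmetric])
    also have "\<dots> \<le> emeasure N W"
      using AB sets_Pair1[OF Gs] unfolding W_def by (intro emeasure_mono) auto
    finally show ?thesis unfolding W_def .
  qed
  have "emeasure P G > 0"
  proof (rule ccontr)
    assume "\<not> emeasure P G > 0"
    then have "emeasure P G = 0" by simp
    then have "AE x in m. emeasure N (Pair x -` G) = 0"
      using eq nn_integral_0_iff_AE[OF sigma_finite_measure.measurable_emeasure_Pair[OF sfN Gs]] by simp
    then have "AE x in m. False" by (rule eventually_mono) (use pos in \<open>auto simp: less_le\<close>)
    then show False using prob_space.AE_False[OF m_facts(2)] by simp
  qed
  then show "emeasure (Z r) V > 0" using ZV by simp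
qed


lemma marg: assumes "A \<in> sets borel" shows "measure P (A \<times> UNIV) = measure m A"
proof -
  have U: "UNIV \<in> sets N" using sets.top[of N] spN by simp
  have "emeasure P (A \<times> UNIV) = emeasure m A * emeasure N UNIV"
    using assms m_facts(1) U by (intro sigma_finite_measure.emeasure_pair_measure_Times[OF sfN]) auto
  also have "emeasure N UNIV = 1" using prob_space.emeasure_space_1[OF pN] spN by simp
  finally show ?thesis by (simp add: measure_def)
qed

definition fk :: "nat \<Rightarrow> 'a \<times> 'a \<times> real \<Rightarrow> real" where "fk k = (\<lambda>\<omega>. dist (fst \<omega>) (gmap (real (Suc k)) \<omega>))"

lemma fk_meas: "fk k \<in> borel_measurable P"
proof -
  have "continuous_on UNIV (fk k)" unfolding fk_def
    by (intro continuous_on_dist continuous_on_fst continuous_on_id gmap_cont[OF tvs])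
  then show ?thesis
    using borel_measurable_continuous_onI measurable_cong_sets[OF sP refl] by blast
qed

lemma fk_lim: "(\<lambda>k. fk k \<omega>) \<longlonglongrightarrow> 0"
proof -
  obtain x y t where \<omega>: "\<omega> = (x, y, t)" by (cases \<omega>) auto
  have c: "continuous_on UNIV (\<lambda>s::real. x + s *\<^sub>R y)"
    by (intro tvs_add_cont[OF tvs] tvs_scale_cont[OF tvs] continuous_on_const continuous_on_id)
  have "(\<lambda>k. t * inverse (real (Suc k))) \<longlonglongrightarrow> t * 0"
    by (intro tendsto_mult tendsto_const LIMSEQ_inverse_real_of_nat)
  then have "(\<lambda>k. t / real (Suc k)) \<longlonglongrightarrow> 0" by (simp add: divide_inverse)
  from continuous_on_tendsto_compose[OF c this] have "(\<lambda>k. x + (t / real (Suc k)) *\<^sub>R y) \<longlonglongrightarrow> x + 0 *\<^sub>R y"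
    by simp
  then have "(\<lambda>k. dist x (x + (t / real (Suc k)) *\<^sub>R y)) \<longlonglongrightarrow> dist x x"
    by (intro tendsto_dist tendsto_const) simp
  then show ?thesis unfolding fk_def gmap_def \<omega> by simp
qed

lemma close: assumes e: "e > 0" shows "\<exists>n. prokhorov_dist m (Z (real (Suc n))) \<le> e"
proof -
  interpret P: prob_space P by (rule pP)
  define Bad where "Bad n = (\<Union>k. {\<omega>. e \<le> fk (k + n) \<omega>})" for n
  have Ek: "{\<omega>. e \<le> fk k \<omega>} \<in> sets P" for k
    using measurable_sets[OF fk_meas, of "{e..}" k] spP by (simp add: vimage_def)
  have Bs: "range Bad \<subseteq> sets P" unfolding Bad_def using Ek by auto
  have dec: "decseq Bad" unfolding decseq_def Bad_def
  proof (intro allI impI subsetI)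
    fix n n' \<omega> assume nn: "n \<le> n'" and "\<omega> \<in> (\<Union>k. {\<omega>. e \<le> fk (k + n') \<omega>})"
    then obtain k where "e \<le> fk (k + n') \<omega>" by auto
    moreover have "k + n' = (k + n' - n) + n" using nn by simp
    ultimately have "e \<le> fk ((k + n' - n) + n) \<omega>" by simp
    then show "\<omega> \<in> (\<Union>k. {\<omega>. e \<le> fk (k + n) \<omega>})" by blast
  qed
  have emp: "(\<Inter>n. Bad n) = {}"
  proof (rule ccontr)
    assume "(\<Inter>n. Bad n) \<noteq> {}"
    then obtain \<omega> where "\<omega> \<in> (\<Inter>n. Bad n)" by blast
    then have w: "\<And>n. \<omega> \<in> Bad n" by blast
    have "eventually (\<lambda>k. fk k \<omega> < e) sequentially"
      using fk_lim e by (intro order_tendstoD) auto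
    then obtain K where K: "\<And>k. k \<ge> K \<Longrightarrow> fk k \<omega> < e" by (auto simp: eventually_sequentially)
    from w[of K] obtain k where "e \<le> fk (k + K) \<omega>" unfolding Bad_def by auto
    with K[of "k + K"] show False by simp
  qed
  from P.finite_Lim_measure_decseq[OF Bs dec] emp
  have "(\<lambda>n. measure P (Bad n)) \<longlonglongrightarrow> 0" by simp
  then have "eventually (\<lambda>n. measure P (Bad n) < e) sequentially"
    using e by (intro order_tendstoD) auto
  then obtain n where n: "measure P (Bad n) < e" by (auto simp: eventually_sequentially)
  have Bn: "Bad n \<in> sets P" using Bs by auto
  have good: "fk n \<omega> < e" if "\<omega> \<notin> Bad n" for \<omega>
  proof -
    have "\<omega> \<notin> {\<omega>. e \<le> fk (0 + n) \<omega>}" using that unfolding Bad_def by blast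
    then show ?thesis by simp
  qed
  define r where "r = real (Suc n)"
  have gm: "gmap r \<in> borel_measurable P" by (rule g_meas)
  show ?thesis
  proof (intro exI[of _ n] pd_le e)
    fix A :: "'a set" assume A: "A \<in> sets borel"
    have Es: "eps_nbhd A e \<in> sets borel" by simp
    have gA: "gmap r -` A \<in> sets P" using measurable_sets[OF gm A] spP by simp
    have gE: "gmap r -` eps_nbhd A e \<in> sets P" using measurable_sets[OF gm Es] spP by simp
    have U: "UNIV \<in> sets N" using sets.top[of N] spN by simp
    have EU: "eps_nbhd A e \<times> UNIV \<in> sets P" using Es m_facts(1) U by (intro pair_measureI) auto
    have ZA: "measure (Z r) B = measure P (gmap r -` B)" if "B \<in> sets borel" for B
      unfolding Z_def using measure_distr[OF gm that] spP by simp
    have "measure m A = measure P (A \<times> UNIV)" using marg[OF A] by simp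
    also have "\<dots> \<le> measure P (gmap r -` eps_nbhd A e \<union> Bad n)"
    proof (rule P.finite_measure_mono)
      show "A \<times> UNIV \<subseteq> gmap r -` eps_nbhd A e \<union> Bad n"
      proof
        fix \<omega> assume "\<omega> \<in> A \<times> (UNIV :: ('a \<times> real) set)"
        then have "fst \<omega> \<in> A" by auto
        moreover have "\<omega> \<notin> Bad n \<Longrightarrow> dist (gmap r \<omega>) (fst \<omega>) < e"
          using good[of \<omega>] unfolding fk_def r_def by (simp add: dist_commute)
        ultimately show "\<omega> \<in> gmap r -` eps_nbhd A e \<union> Bad n"
        proof (cases "\<omega> \<in> Bad n")
          case False
          then have "gmap r \<omega> \<in> eps_nbhd A e"
            unfolding eps_nbhd_def using \<open>fst \<omega> \<in> A\<close> \<open>\<omega> \<notin> Bad n \<Longrightarrow> dist (gmap r \<omega>) (fst \<omega>) < e\<close>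
            by blast
          then show ?thesis by blast
        qed blast
      qed
      show "gmap r -` eps_nbhd A e \<union> Bad n \<in> sets P" using gE Bn by auto
    qed
    also have "\<dots> \<le> measure P (gmap r -` eps_nbhd A e) + measure P (Bad n)"
      by (rule measure_Un_le[OF gE Bn])
    also have "\<dots> \<le> measure (Z r) (eps_nbhd A e) + e" using ZA[OF Es] n by simp
    finally have 1: "measure m A \<le> measure (Z r) (eps_nbhd A e) + e" .
    have "measure (Z r) A = measure P (gmap r -` A)" by (rule ZA[OF A])
    also have "\<dots> \<le> measure P ((eps_nbhd A e \<times> UNIV) \<union> Bad n)"
    proof (rule P.finite_measure_mono)
      show "gmap r -` A \<subseteq> (eps_nbhd A e \<times> UNIV) \<union> Bad n"
      proof
        fix \<omega> assume "\<omega> \<in> gmap r -` A"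
        then have "gmap r \<omega> \<in> A" by auto
        moreover have "\<omega> \<notin> Bad n \<Longrightarrow> dist (fst \<omega>) (gmap r \<omega>) < e"
          using good[of \<omega>] unfolding fk_def r_def by simp
        ultimately show "\<omega> \<in> (eps_nbhd A e \<times> UNIV) \<union> Bad n"
        proof (cases "\<omega> \<in> Bad n")
          case False
          then have "fst \<omega> \<in> eps_nbhd A e"
            unfolding eps_nbhd_def using \<open>gmap r \<omega> \<in> A\<close> \<open>\<omega> \<notin> Bad n \<Longrightarrow> dist (fst \<omega>) (gmap r \<omega>) < e\<close>
            by blast
          then have "\<omega> \<in> eps_nbhd A e \<times> UNIV" by (cases \<omega>) simp
          then show ?thesis by blast
        qed blast
      qed
      show "(eps_nbhd A e \<times> UNIV) \<union> Bad n \<in> sets P" using EU Bn by auto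
    qed
    also have "\<dots> \<le> measure P (eps_nbhd A e \<times> UNIV) + measure P (Bad n)"
      by (rule measure_Un_le[OF EU Bn])
    also have "\<dots> \<le> measure m (eps_nbhd A e) + e" using marg[OF Es] n by simp
    finally have 2: "measure (Z r) A \<le> measure m (eps_nbhd A e) + e" .
    show "measure m A \<le> measure (Z (real (Suc n))) (eps_nbhd A e) + e \<and>
      measure (Z (real (Suc n))) A \<le> measure m (eps_nbhd A e) + e"
      using 1 2 unfolding r_def by simp
  qed
qed

end

theorem lemma3:
  fixes T :: "'a::{polish_space, real_vector} \<Rightarrow> 'a" and F :: "'a set"
  assumes tvs: "tvs_ops_continuous TYPE('a)"
    and lin: "linear T" and cont: "continuous_on UNIV T"
    and ne: "inv_probs_full T \<noteq> {}"
    and closedF: "closed F"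
    and dil: "dilation_invariant (set_diffs F)"
    and nwd: "nowhere_dense (set_diffs F)"
    and invF: "T ` (F - ker_star T) \<subseteq> F"
    and invD: "T ` (closure (set_diffs F) - ker_star T) \<subseteq> closure (set_diffs F)"
  shows "gdelta_in (subtopology prokhorov_topology (inv_probs T)) (inv_probs_full_on T (UNIV - F))
    \<and> (subtopology prokhorov_topology (inv_probs T)) closure_of (inv_probs_full_on T (UNIV - F))
        = inv_probs T"
proof
  show "gdelta_in (subtopology prokhorov_topology (inv_probs T)) (inv_probs_full_on T (UNIV - F))"
    by (rule gdelta_part[OF closedF])
  define D where "D = closure (set_diffs F)"
  obtain \<mu> where mu: "\<mu> \<in> inv_probs_full T" using ne by auto
  have Dc: "closed D" unfolding D_def by simp
  have Di: "interior D = {}" using nwd unfolding D_def nowhere_dense_def .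
  have D0: "0 \<in> D" if "D \<noteq> {}"
  proof -
    have "set_diffs F \<noteq> {}" using that unfolding D_def by auto
    then obtain x where "x \<in> F" unfolding set_diffs_def by auto
    then have "x - x \<in> set_diffs F" unfolding set_diffs_def by blast
    then show ?thesis unfolding D_def using closure_subset by fastforce
  qed
  have DT: "T ` (D - ker_star T) \<subseteq> D" using invD unfolding D_def .
  from restrict_good[OF lin cont mu Dc Di D0 DT]
  obtain \<nu> where nu: "\<nu> \<in> inv_probs_full T" "emeasure \<nu> D = 0" by blast
  have subD: "set_diffs F \<subseteq> D" unfolding D_def by (rule closure_subset)
  let ?X = "subtopology prokhorov_topology (inv_probs T)"
  have top: "topspace ?X = inv_probs T" using inv_probs_sub by (auto simp: topspace_prok)
  show "?X closure_of (inv_probs_full_on T (UNIV - F)) = inv_probs T"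
  proof
    show "?X closure_of (inv_probs_full_on T (UNIV - F)) \<subseteq> inv_probs T"
      using closure_of_subset_topspace[of ?X] top by simp
    show "inv_probs T \<subseteq> ?X closure_of (inv_probs_full_on T (UNIV - F))"
    proof
      fix M assume M: "M \<in> inv_probs T"
      interpret C: cons T F D M \<nu>
        using tvs lin cont M nu Dc closedF subD dil by (simp add: cons_def)
      show "M \<in> ?X closure_of (inv_probs_full_on T (UNIV - F))"
        unfolding in_closure_of
      proof (intro conjI allI impI)
        show "M \<in> topspace ?X" using M top by simp
        fix U assume U: "M \<in> U \<and> openin ?X U"
        then obtain Op where Op: "openin prokhorov_topology Op" "U = Op \<inter> inv_probs T"
          unfolding openin_subtopology by blast
        then have "M \<in> Op" using U by auto
        then obtain e where e: "e > 0" "\<And>N. N \<in> borel_probs \<Longrightarrow> prokhorov_dist M N < e \<Longrightarrow> N \<in> Op"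
          using Op(1) unfolding openin_prok by blast
        from C.close[of "e/2"] e obtain n where n: "prokhorov_dist M (C.Z (real (Suc n))) \<le> e/2" by auto
        define r where "r = real (Suc n)"
        have r: "r > 0" unfolding r_def by simp
        have Zb: "C.Z r \<in> borel_probs" by (rule C.Z_bp)
        have ZO: "C.Z r \<in> Op" using e(2)[OF Zb] n e(1) unfolding r_def by simp
        have Zi: "C.Z r \<in> inv_probs T" unfolding inv_probs_def using Zb C.Z_inv by simp
        have sZ: "sets (C.Z r) = sets borel" and pZ: "prob_space (C.Z r)" using borel_probsD[OF Zb] by auto
        have "measure (C.Z r) F = 0" using C.Z_F[OF r] by (simp add: measure_def)
        then have "emeasure (C.Z r) (UNIV - F) = 1" using prob_emeasure_eq_1_iff[OF pZ sZ closedF] by simp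
        then have "C.Z r \<in> inv_probs_full_on T (UNIV - F)"
          unfolding inv_probs_full_on_def inv_probs_full_def using Zi C.Z_full[OF r] by simp
        then show "\<exists>y. y \<in> inv_probs_full_on T (UNIV - F) \<and> y \<in> U" using ZO Zi Op(2) by blast
      qed
    qed
  qed
qed


end
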